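(* The theory $\mathrm{IKP}$ does not prove $\mathrm{PlUb}$. Specifically, $1 \in \mathrm{PlOrd}$, yet $\mathrm{IKP}$ does not prove that the plump successor $1^{\mathrm{pl}+}$ exists as a set.
   Context: $\mathrm{IKP}$ is intuitionistic Kripke–Platek set theory (with strong infinity). An ordinal is a transitive set of transitive sets. For sets $\alpha,\gamma$, $\mathrm{relpl}_\alpha(\gamma)$ denotes $\forall \delta \in \gamma\ \forall \varepsilon \in \alpha\,(\varepsilon \subseteq \delta \rightarrow \varepsilon \in \gamma)$. $\mathrm{PlOrd}$ is the class of ordinals $\alpha$ such that for all $\beta \in \alpha$ and all $\gamma \subseteq \beta$ with $\mathrm{relpl}_\alpha(\gamma)$, we have $\gamma \in \alpha$ and $\forall \delta \in \alpha\,(\beta \in \delta \rightarrow \gamma \in \delta)$. For $\alpha \in \mathrm{PlOrd}$, the plump successor is $\alpha^{\mathrm{pl}+} = \{\beta \subseteq \alpha : \mathrm{relpl}_\alpha(\beta)\} = \mathcal{P}(\alpha) \cap \mathrm{PlOrd}$ (when this is a set). $\mathrm{PlUb}$ is the axiom $\forall \alpha \in \mathrm{PlOrd}\ \exists \beta \in \mathrm{PlOrd}\ \alpha \in \beta$. *)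

theory Defs
  imports Main
begin

text \<open>Variables are de Bruijn indices: index 0 refers to the innermost binder.
  The only non-logical symbol is membership; equality is logical.\<close>

datatype fm =
    Mem nat nat          (* Mem x y  :  x \<in> y *)
  | Eq nat nat
  | FF
  | Conj fm fm
  | Disj fm fm
  | Imp fm fm
  | All fm
  | Ex fm

definition Iff :: "fm \<Rightarrow> fm \<Rightarrow> fm" where
  "Iff a b = Conj (Imp a b) (Imp b a)"

definition liftv :: "nat \<Rightarrow> nat \<Rightarrow> nat" where
  "liftv k n = (if n < k then n else Suc n)"

fun lift :: "nat \<Rightarrow> fm \<Rightarrow> fm" where
  "lift k (Mem a b) = Mem (liftv k a) (liftv k b)"
| "lift k (Eq a b) = Eq (liftv k a) (liftv k b)"
| "lift k FF = FF"
| "lift k (Conj p q) = Conj (lift k p) (lift k q)"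
| "lift k (Disj p q) = Disj (lift k p) (lift k q)"
| "lift k (Imp p q) = Imp (lift k p) (lift k q)"
| "lift k (All p) = All (lift (Suc k) p)"
| "lift k (Ex p) = Ex (lift (Suc k) p)"

definition substv :: "nat \<Rightarrow> nat \<Rightarrow> nat \<Rightarrow> nat" where
  "substv k t n = (if n < k then n else if n = k then t else n - 1)"

fun subst :: "fm \<Rightarrow> nat \<Rightarrow> nat \<Rightarrow> fm" where
  "subst (Mem a b) k t = Mem (substv k t a) (substv k t b)"
| "subst (Eq a b) k t = Eq (substv k t a) (substv k t b)"
| "subst FF k t = FF"
| "subst (Conj p q) k t = Conj (subst p k t) (subst q k t)"
| "subst (Disj p q) k t = Disj (subst p k t) (subst q k t)"
| "subst (Imp p q) k t = Imp (subst p k t) (subst q k t)"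
| "subst (All p) k t = All (subst p (Suc k) (Suc t))"
| "subst (Ex p) k t = Ex (subst p (Suc k) (Suc t))"

inductive prv :: "fm set \<Rightarrow> fm set \<Rightarrow> fm \<Rightarrow> bool" for T :: "fm set" where
  Ax:     "\<phi> \<in> T \<Longrightarrow> prv T \<Gamma> \<phi>"
| Assm:   "\<phi> \<in> \<Gamma> \<Longrightarrow> prv T \<Gamma> \<phi>"
| FFE:    "prv T \<Gamma> FF \<Longrightarrow> prv T \<Gamma> \<phi>"
| ConjI:  "prv T \<Gamma> \<phi> \<Longrightarrow> prv T \<Gamma> \<psi> \<Longrightarrow> prv T \<Gamma> (Conj \<phi> \<psi>)"
| ConjE1: "prv T \<Gamma> (Conj \<phi> \<psi>) \<Longrightarrow> prv T \<Gamma> \<phi>"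
| ConjE2: "prv T \<Gamma> (Conj \<phi> \<psi>) \<Longrightarrow> prv T \<Gamma> \<psi>"
| DisjI1: "prv T \<Gamma> \<phi> \<Longrightarrow> prv T \<Gamma> (Disj \<phi> \<psi>)"
| DisjI2: "prv T \<Gamma> \<psi> \<Longrightarrow> prv T \<Gamma> (Disj \<phi> \<psi>)"
| DisjE:  "prv T \<Gamma> (Disj \<phi> \<psi>) \<Longrightarrow> prv T (insert \<phi> \<Gamma>) \<chi> \<Longrightarrow> prv T (insert \<psi> \<Gamma>) \<chi>
           \<Longrightarrow> prv T \<Gamma> \<chi>"
| ImpI:   "prv T (insert \<phi> \<Gamma>) \<psi> \<Longrightarrow> prv T \<Gamma> (Imp \<phi> \<psi>)"
| ImpE:   "prv T \<Gamma> (Imp \<phi> \<psi>) \<Longrightarrow> prv T \<Gamma> \<phi> \<Longrightarrow> prv T \<Gamma> \<psi>"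
| AllI:   "prv T (lift 0 ` \<Gamma>) \<phi> \<Longrightarrow> prv T \<Gamma> (All \<phi>)"
| AllE:   "prv T \<Gamma> (All \<phi>) \<Longrightarrow> prv T \<Gamma> (subst \<phi> 0 t)"
| ExI:    "prv T \<Gamma> (subst \<phi> 0 t) \<Longrightarrow> prv T \<Gamma> (Ex \<phi>)"
| ExE:    "prv T \<Gamma> (Ex \<phi>) \<Longrightarrow> prv T (insert \<phi> (lift 0 ` \<Gamma>)) (lift 0 \<psi>) \<Longrightarrow> prv T \<Gamma> \<psi>"
| EqRefl: "prv T \<Gamma> (Eq t t)"
| EqSubst: "prv T \<Gamma> (Eq s t) \<Longrightarrow> prv T \<Gamma> (subst \<phi> 0 s) \<Longrightarrow> prv T \<Gamma> (subst \<phi> 0 t)"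

section \<open>Defined formulas (arguments are de Bruijn indices of free variables)\<close>

definition subsetf :: "nat \<Rightarrow> nat \<Rightarrow> fm" where
  "subsetf a b = All (Imp (Mem 0 (Suc a)) (Mem 0 (Suc b)))"

definition isEmpty :: "nat \<Rightarrow> fm" where
  "isEmpty v = All (Imp (Mem 0 (Suc v)) FF)"

definition isOne :: "nat \<Rightarrow> fm" where
  "isOne v = All (Iff (Mem 0 (Suc v)) (isEmpty 0))"

definition isSucc :: "nat \<Rightarrow> nat \<Rightarrow> fm" where
  "isSucc z y = All (Iff (Mem 0 (Suc z)) (Disj (Mem 0 (Suc y)) (Eq 0 (Suc y))))"

definition ind :: "nat \<Rightarrow> fm" where
  "ind v = Conj (Ex (Conj (Mem 0 (Suc v)) (isEmpty 0)))
                (All (Imp (Mem 0 (Suc v)) (Ex (Conj (Mem 0 (v + 2)) (isSucc 0 1)))))"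

definition transf :: "nat \<Rightarrow> fm" where
  "transf v = All (Imp (Mem 0 (Suc v)) (subsetf 0 (Suc v)))"

definition ordf :: "nat \<Rightarrow> fm" where
  "ordf v = Conj (transf v) (All (Imp (Mem 0 (Suc v)) (transf 0)))"

definition relpl :: "nat \<Rightarrow> nat \<Rightarrow> fm" where
  (* relpl_a(g): \<forall>\<delta>\<in>g \<forall>\<epsilon>\<in>a (\<epsilon> \<subseteq> \<delta> \<longrightarrow> \<epsilon> \<in> g) *)
  "relpl a g = All (Imp (Mem 0 (Suc g))
                  (All (Imp (Mem 0 (a + 2)) (Imp (subsetf 0 1) (Mem 0 (g + 2))))))"

definition plord :: "nat \<Rightarrow> fm" where
  (* a \<in> PlOrd: ordinal, and \<forall>\<beta>\<in>a \<forall>\<gamma>(\<gamma>\<subseteq>\<beta> \<and> relpl_a(\<gamma>) \<longrightarrow> \<gamma>\<in>a \<and> \<forall>\<delta>\<in>a(\<beta>\<in>\<delta> \<longrightarrow> \<gamma>\<in>\<delta>)) *)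
  "plord a = Conj (ordf a)
     (All (Imp (Mem 0 (Suc a))
        (All (Imp (Conj (subsetf 0 1) (relpl (a + 2) 0))
               (Conj (Mem 0 (a + 2))
                     (All (Imp (Mem 0 (a + 3)) (Imp (Mem 2 0) (Mem 1 0)))))))))"

inductive Delta0 :: "fm \<Rightarrow> bool" where
  "Delta0 (Mem a b)"
| "Delta0 (Eq a b)"
| "Delta0 FF"
| "Delta0 p \<Longrightarrow> Delta0 q \<Longrightarrow> Delta0 (Conj p q)"
| "Delta0 p \<Longrightarrow> Delta0 q \<Longrightarrow> Delta0 (Disj p q)"
| "Delta0 p \<Longrightarrow> Delta0 q \<Longrightarrow> Delta0 (Imp p q)"
| "Delta0 p \<Longrightarrow> Delta0 (All (Imp (Mem 0 (Suc a)) p))"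
| "Delta0 p \<Longrightarrow> Delta0 (Ex (Conj (Mem 0 (Suc a)) p))"

text \<open>Schemata may contain free variables (parameters); an axiom with free variables
  acts as its universal closure, since axioms are available in every context.\<close>

inductive_set IKP :: "fm set" where
  extensionality:
    "All (All (Imp (All (Iff (Mem 0 2) (Mem 0 1))) (Eq 1 0))) \<in> IKP"
| empty_set: "Ex (isEmpty 0) \<in> IKP"
| pairing: "All (All (Ex (Conj (Mem 2 0) (Mem 1 0)))) \<in> IKP"
| union: "All (Ex (All (Imp (Mem 0 2) (All (Imp (Mem 0 1) (Mem 0 2)))))) \<in> IKP"
| delta0_separation:
    (* \<exists>b \<forall>x (x\<in>b \<longleftrightarrow> x\<in>a \<and> \<phi>(x)) ; \<phi> has x as index 0 *)
    "Delta0 \<phi> \<Longrightarrow> Ex (All (Iff (Mem 0 1) (Conj (Mem 0 (a + 2)) (lift 1 \<phi>)))) \<in> IKP"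
| delta0_collection:
    (* \<forall>x\<in>a \<exists>y \<phi>(x,y) \<longrightarrow> \<exists>b \<forall>x\<in>a \<exists>y\<in>b \<phi>(x,y) ; in \<phi>, y is index 0, x is index 1 *)
    "Delta0 \<phi> \<Longrightarrow>
      Imp (All (Imp (Mem 0 (Suc a)) (Ex \<phi>)))
          (Ex (All (Imp (Mem 0 (a + 2)) (Ex (Conj (Mem 0 2) (lift 2 \<phi>)))))) \<in> IKP"
| set_induction:
    "Imp (All (Imp (All (Imp (Mem 0 1) (lift 1 \<phi>))) \<phi>)) (All \<phi>) \<in> IKP"
| strong_infinity:
    "Ex (Conj (ind 0) (All (Imp (ind 0) (subsetf 1 0)))) \<in> IKP"

definition IKP_proves :: "fm \<Rightarrow> bool" where
  "IKP_proves \<phi> = prv IKP {} \<phi>"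

definition PlUb :: fm where
  "PlUb = All (Imp (plord 0) (Ex (Conj (plord 0) (Mem 1 0))))"

definition one_PlOrd :: fm where
  "one_PlOrd = All (Imp (isOne 0) (plord 0))"

definition one_plsucc_exists :: fm where
  "one_plsucc_exists =
     All (Imp (isOne 0) (Ex (All (Iff (Mem 0 1) (Conj (subsetf 0 2) (relpl 2 0))))))"

end

theory Submission
  imports Defs "HOL-Library.Countable_Set_Type"
begin


datatype tv = Top | Lv "nat set"
datatype wld = R | L nat
datatype nm = Nm "(nm \<times> tv) cset"

definition le :: "wld \<Rightarrow> wld \<Rightarrow> bool" where "le w v \<longleftrightarrow> w = R \<or> w = v"

lemma le_refl[simp]: "le w w" by (simp add: le_def)
lemma le_trans: "le u v \<Longrightarrow> le v w \<Longrightarrow> le u w" by (auto simp: le_def)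
lemma le_R[simp]: "le R v" by (simp add: le_def)
lemma le_L[simp]: "le (L n) v \<longleftrightarrow> v = L n" by (auto simp: le_def)

fun inT :: "wld \<Rightarrow> tv \<Rightarrow> bool" where
  "inT w Top = True" | "inT R (Lv S) = False" | "inT (L n) (Lv S) = (n \<in> S)"

lemma inT_mono: "le w v \<Longrightarrow> inT w u \<Longrightarrow> inT v u"
  by (cases u; auto simp: le_def)

definition ch :: "nm \<Rightarrow> (nm \<times> tv) set" where "ch x = (case x of Nm c \<Rightarrow> rcset c)"

lemma countable_ch[simp]: "countable (ch x)" by (cases x) (simp add: ch_def)

definition mk :: "(nm \<times> tv) set \<Rightarrow> nm" where "mk A = Nm (acset A)"

lemma ch_mk[simp]: "countable A \<Longrightarrow> ch (mk A) = A"
  by (simp add: mk_def ch_def acset_inverse)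

lemma nm_induct[case_names step]:
  assumes "\<And>x. (\<And>t u. (t,u) \<in> ch x \<Longrightarrow> P t) \<Longrightarrow> P x"
  shows "P x"
proof (induction x rule: nm.induct)
  case (Nm c)
  show ?case
    by (rule assms) (force simp: ch_def intro: Nm)
qed

inductive eqw :: "wld \<Rightarrow> nm \<Rightarrow> nm \<Rightarrow> bool" where
  eqwI: "(\<forall>v. le w v \<longrightarrow>
     (\<forall>p\<in>ch x. inT v (snd p) \<longrightarrow> (\<exists>q\<in>ch y. inT v (snd q) \<and> eqw v (fst p) (fst q))) \<and>
     (\<forall>q\<in>ch y. inT v (snd q) \<longrightarrow> (\<exists>p\<in>ch x. inT v (snd p) \<and> eqw v (fst p) (fst q))))
   \<Longrightarrow> eqw w x y"

lemma eqw_iff: "eqw w x y \<longleftrightarrow> (\<forall>v. le w v \<longrightarrow>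
     (\<forall>p\<in>ch x. inT v (snd p) \<longrightarrow> (\<exists>q\<in>ch y. inT v (snd q) \<and> eqw v (fst p) (fst q))) \<and>
     (\<forall>q\<in>ch y. inT v (snd q) \<longrightarrow> (\<exists>p\<in>ch x. inT v (snd p) \<and> eqw v (fst p) (fst q))))"
  by (subst eqw.simps) auto

lemma eqw_refl[simp]: "eqw w x x"
proof (induction x arbitrary: w rule: nm_induct)
  case (step x)
  show ?case by (subst eqw_iff) (force intro: step)
qed

lemma eqw_sym: "eqw w x y \<Longrightarrow> eqw w y x"
proof (induction rule: eqw.induct)
  case (eqwI w x y)
  show ?case by (rule eqw.eqwI) (metis eqwI)
qed

lemma eqw_trans: "eqw w x y \<Longrightarrow> eqw w y z \<Longrightarrow> eqw w x z"
proof (induction x arbitrary: w y z rule: nm_induct)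
  case (step x)
  show ?case
  proof (subst eqw_iff, intro allI impI conjI ballI)
    fix v p assume v: "le w v" and p: "p \<in> ch x" "inT v (snd p)"
    from step.prems(1) v p obtain q where q: "q\<in>ch y" "inT v (snd q)" "eqw v (fst p) (fst q)"
      by (subst (asm) eqw_iff) blast
    from step.prems(2) v q obtain r where r: "r\<in>ch z" "inT v (snd r)" "eqw v (fst q) (fst r)"
      by (subst (asm) eqw_iff) blast
    show "\<exists>r\<in>ch z. inT v (snd r) \<and> eqw v (fst p) (fst r)"
      using step.IH[of "fst p" "snd p"] p q r by auto
  next
    fix v r assume v: "le w v" and r: "r \<in> ch z" "inT v (snd r)"
    from step.prems(2) v r obtain q where q: "q\<in>ch y" "inT v (snd q)" "eqw v (fst q) (fst r)"
      by (subst (asm) eqw_iff) blast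
    from step.prems(1) v q obtain p where p: "p\<in>ch x" "inT v (snd p)" "eqw v (fst p) (fst q)"
      by (subst (asm) eqw_iff) blast
    show "\<exists>p\<in>ch x. inT v (snd p) \<and> eqw v (fst p) (fst r)"
      using step.IH[of "fst p" "snd p"] p q r by auto
  qed
qed

lemma eqw_mono: "le w v \<Longrightarrow> eqw w x y \<Longrightarrow> eqw v x y"
  by (subst eqw_iff, subst (asm) eqw_iff) (meson le_trans)

definition mem :: "wld \<Rightarrow> nm \<Rightarrow> nm \<Rightarrow> bool" where
  "mem w z y \<longleftrightarrow> (\<exists>q\<in>ch y. inT w (snd q) \<and> eqw w z (fst q))"

lemma mem_mono: "le w v \<Longrightarrow> mem w z y \<Longrightarrow> mem v z y"
  unfolding mem_def by (meson inT_mono eqw_mono)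

lemma mem_congL: "mem w z y \<Longrightarrow> eqw w z z' \<Longrightarrow> mem w z' y"
  unfolding mem_def by (meson eqw_sym eqw_trans)

lemma mem_congR: "mem w z y \<Longrightarrow> eqw w y y' \<Longrightarrow> mem w z y'"
proof -
  assume "mem w z y" "eqw w y y'"
  then obtain q where q: "q\<in>ch y" "inT w (snd q)" "eqw w z (fst q)" unfolding mem_def by blast
  with \<open>eqw w y y'\<close> obtain r where "r\<in>ch y'" "inT w (snd r)" "eqw w (fst q) (fst r)"
    by (subst (asm) eqw_iff) (meson le_refl)
  with q show ?thesis unfolding mem_def by (meson eqw_trans)
qed

lemma mem_child: "(t,u) \<in> ch y \<Longrightarrow> inT w u \<Longrightarrow> mem w t y"
  unfolding mem_def by force

lemma ext_sem: "(\<And>v z. le w v \<Longrightarrow> mem v z x \<longleftrightarrow> mem v z y) \<Longrightarrow> eqw w x y"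
  apply (rule eqw.eqwI)
  apply (intro allI impI conjI ballI)
  subgoal for v p using mem_child[of "fst p" "snd p" x v] unfolding mem_def by auto
  subgoal for v q
  proof -
    assume h: "\<And>v z. le w v \<Longrightarrow> mem v z x \<longleftrightarrow> mem v z y" and v: "le w v" and q: "q \<in> ch y" "inT v (snd q)"
    have "mem v (fst q) y" using q mem_child[of "fst q" "snd q" y v] by auto
    hence "mem v (fst q) x" using h v by blast
    thus ?thesis unfolding mem_def by (auto intro: eqw_sym)
  qed
  done



fun sat :: "wld \<Rightarrow> (nat \<Rightarrow> nm) \<Rightarrow> fm \<Rightarrow> bool" where
  "sat w e (Mem a b) = mem w (e a) (e b)"
| "sat w e (Eq a b) = eqw w (e a) (e b)"
| "sat w e FF = False"
| "sat w e (Conj p q) = (sat w e p \<and> sat w e q)"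
| "sat w e (Disj p q) = (sat w e p \<or> sat w e q)"
| "sat w e (Imp p q) = (\<forall>v. le w v \<longrightarrow> sat v e p \<longrightarrow> sat v e q)"
| "sat w e (All p) = (\<forall>v. le w v \<longrightarrow> (\<forall>d. sat v (case_nat d e) p))"
| "sat w e (Ex p) = (\<exists>d. sat w (case_nat d e) p)"

lemma sat_mono: "le w v \<Longrightarrow> sat w e p \<Longrightarrow> sat v e p"
proof (induction p arbitrary: w v e)
  case (Mem x1 x2) thus ?case by (simp add: mem_mono)
next
  case (Eq x1 x2) thus ?case by (simp add: eqw_mono)
next
  case (Imp p1 p2) thus ?case by (meson le_trans sat.simps(6))
next
  case (All p) thus ?case by (meson le_trans sat.simps(7))
qed auto

lemma comp_lift: "case_nat d e \<circ> liftv (Suc k) = case_nat d (e \<circ> liftv k)"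
  by (rule ext, case_tac x) (auto simp: liftv_def)

lemma sat_lift: "sat w e (lift k p) = sat w (e \<circ> liftv k) p"
  by (induction p arbitrary: w e k) (simp_all add: comp_lift)

lemma comp_subst: "case_nat d e \<circ> substv (Suc k) (Suc t) = case_nat d (e \<circ> substv k t)"
  apply (rule ext, case_tac x)
   apply (auto simp: substv_def split: nat.splits)
  done

lemma sat_subst: "sat w e (subst p k t) = sat w (e \<circ> substv k t) p"
  by (induction p arbitrary: w e k t) (simp_all add: comp_subst)

lemma subst0_env: "e \<circ> substv 0 t = case_nat (e t) e"
  by (rule ext, case_tac x) (auto simp: substv_def)

lemma lift0_env: "case_nat d e \<circ> liftv 0 = e"
  by (rule ext) (auto simp: liftv_def)

lemma sat_subst0: "sat w e (subst p 0 t) = sat w (case_nat (e t) e) p"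
  by (simp add: sat_subst subst0_env)

lemma sat_lift0: "sat w (case_nat d e) (lift 0 p) = sat w e p"
  by (simp add: sat_lift lift0_env)

lemma sat_cong: "(\<And>n. eqw w (e n) (e' n)) \<Longrightarrow> sat w e p = sat w e' p"
proof (induction p arbitrary: w e e')
  case (Mem a b)
  then show ?case by (simp) (meson eqw_sym mem_congL mem_congR)
next
  case (Eq a b)
  then show ?case by simp (meson eqw_sym eqw_trans)
next
  case (Imp p q)
  have "\<And>v. le w v \<Longrightarrow> (\<And>n. eqw v (e n) (e' n))" using Imp.prems eqw_mono by blast
  then show ?case using Imp.IH by simp blast
next
  case (All p)
  have "\<And>v d n. le w v \<Longrightarrow> eqw v (case_nat d e n) (case_nat d e' n)"
    using All.prems eqw_mono by (auto split: nat.splits)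
  then show ?case using All.IH by simp blast
next
  case (Ex p)
  have "\<And>d n. eqw w (case_nat d e n) (case_nat d e' n)"
    using Ex.prems by (auto split: nat.splits)
  then show ?case using Ex.IH by simp blast
next
  case (Conj p q) thus ?case by (simp add: Conj.IH[OF Conj.prems])
next
  case (Disj p q) thus ?case by (simp add: Disj.IH[OF Disj.prems])
qed auto

theorem soundness:
  assumes "prv T G p" "\<And>q w e. q \<in> T \<Longrightarrow> sat w e q"
  shows "(\<And>g. g \<in> G \<Longrightarrow> sat w e g) \<Longrightarrow> sat w e p"
  using assms(1)
proof (induction arbitrary: w e rule: prv.induct)
  case (Ax \<phi> \<Gamma>) then show ?case using assms(2) by blast
next
  case (ImpI \<phi> \<Gamma> \<psi>)
  show ?case
  proof (simp, intro allI impI)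
    fix v assume "le w v" "sat v e \<phi>"
    show "sat v e \<psi>"
      apply (rule ImpI.IH)
      using ImpI.prems sat_mono[OF \<open>le w v\<close>] \<open>sat v e \<phi>\<close> by blast
  qed
next
  case (ImpE \<Gamma> \<phi> \<psi>)
  then show ?case by (metis le_refl sat.simps(6))
next
  case (DisjE \<Gamma> \<phi> \<psi> \<chi>)
  then show ?case by (metis insert_iff sat.simps(5))
next
  case (AllI \<Gamma> \<phi>)
  show ?case
  proof (simp, intro allI impI)
    fix v d assume "le w v"
    show "sat v (case_nat d e) \<phi>"
      apply (rule AllI.IH)
      using AllI.prems sat_mono[OF \<open>le w v\<close>] by (auto simp: sat_lift0)
  qed
next
  case (AllE \<Gamma> \<phi> t)
  then show ?case by (simp add: sat_subst0) (metis le_refl)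
next
  case (ExI \<Gamma> \<phi> t)
  then show ?case by (auto simp: sat_subst0)
next
  case (ExE \<Gamma> \<phi> \<psi>)
  from ExE.IH(1)[OF ExE.prems] obtain d where d: "sat w (case_nat d e) \<phi>" by auto
  have "sat w (case_nat d e) (lift 0 \<psi>)"
    by (rule ExE.IH(2)) (auto simp: sat_lift0 d ExE.prems)
  then show ?case by (simp add: sat_lift0)
next
  case (EqSubst \<Gamma> s t \<phi>)
  have e: "eqw w (e s) (e t)" using EqSubst by simp
  have "\<And>n. eqw w (case_nat (e s) e n) (case_nat (e t) e n)"
    using e by (auto split: nat.splits)
  then show ?case using EqSubst.IH(2)[OF EqSubst.prems] sat_cong
    by (simp add: sat_subst0) blast
qed auto



lemma sat_Iff: "sat w e (Iff p q) \<longleftrightarrow> (\<forall>v. le w v \<longrightarrow> (sat v e p \<longleftrightarrow> sat v e q))"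
  unfolding Iff_def by simp (meson le_refl sat_mono)

lemma sat_isEmpty: "sat w e (isEmpty k) \<longleftrightarrow> (\<forall>v. le w v \<longrightarrow> (\<forall>z. \<not> mem v z (e k)))"
  unfolding isEmpty_def by simp (meson le_refl le_trans)

lemma sat_subsetf: "sat w e (subsetf a b) \<longleftrightarrow> (\<forall>v. le w v \<longrightarrow> (\<forall>z. mem v z (e a) \<longrightarrow> mem v z (e b)))"
  unfolding subsetf_def by simp (meson le_refl le_trans mem_mono)

lemma sat_isSucc: "sat w e (isSucc z y) \<longleftrightarrow> (\<forall>v. le w v \<longrightarrow> (\<forall>x. mem v x (e z) \<longleftrightarrow> (mem v x (e y) \<or> eqw v x (e y))))"
  unfolding isSucc_def by (simp add: sat_Iff) (meson le_refl le_trans)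

lemma sat_isOne: "sat w e (isOne k) \<longleftrightarrow> (\<forall>v. le w v \<longrightarrow> (\<forall>x. mem v x (e k) \<longleftrightarrow> (\<forall>v'. le v v' \<longrightarrow> (\<forall>z. \<not> mem v' z x))))"
  unfolding isOne_def by (simp add: sat_Iff sat_isEmpty) (meson le_refl le_trans)

lemma lift1_env: "case_nat x (case_nat b e) \<circ> liftv (Suc 0) = case_nat x e"
  by (rule ext, case_tac xa) (auto simp: liftv_def)

lemma lift2_env: "case_nat y (case_nat x (case_nat b e)) \<circ> liftv 2 = case_nat y (case_nat x e)"
  by (rule ext) (auto simp: liftv_def split: nat.splits)

lemma empty_eq0: "(\<forall>v. le w v \<longrightarrow> (\<forall>z. \<not> mem v z d)) \<Longrightarrow> (\<forall>v. le w v \<longrightarrow> (\<forall>z. \<not> mem v z d')) \<Longrightarrow> eqw w d d'"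
  by (rule ext_sem) auto

definition tmeet :: "tv \<Rightarrow> tv \<Rightarrow> tv" where
  "tmeet a b = (case a of Top \<Rightarrow> b | Lv S \<Rightarrow> (case b of Top \<Rightarrow> Lv S | Lv S' \<Rightarrow> Lv (S \<inter> S')))"

lemma inT_tmeet[simp]: "inT w (tmeet a b) \<longleftrightarrow> inT w a \<and> inT w b"
  by (cases w; cases a; cases b) (auto simp: tmeet_def)

definition tvof :: "wld set \<Rightarrow> tv" where
  "tvof U = (if R \<in> U then Top else Lv {n. L n \<in> U})"

lemma inT_tvof: "(\<And>v v'. v \<in> U \<Longrightarrow> le v v' \<Longrightarrow> v' \<in> U) \<Longrightarrow> inT v (tvof U) \<longleftrightarrow> v \<in> U"
  by (cases v) (auto simp: tvof_def)

definition up :: "wld \<Rightarrow> tv" where "up v = (case v of R \<Rightarrow> Top | L n \<Rightarrow> Lv {n})"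

lemma inT_up[simp]: "inT v' (up v) \<longleftrightarrow> le v v'"
  by (cases v; cases v') (auto simp: up_def le_def)

lemma countable_wld: "countable (UNIV :: wld set)"
proof -
  have "UNIV = insert R (range L)" by (auto intro: wld.exhaust)
  moreover have "countable (range L)" by (rule countable_image) simp
  ultimately show ?thesis by (metis countable_insert)
qed

lemma ax_ext: "sat w e (All (All (Imp (All (Iff (Mem 0 2) (Mem 0 1))) (Eq 1 0))))"
  by (simp add: sat_Iff) (meson ext_sem le_refl)

lemma ax_empty: "sat w e (Ex (isEmpty 0))"
proof -
  have "\<not> mem v z (mk {})" for v z by (simp add: mem_def)
  thus ?thesis by (auto simp: sat_isEmpty)
qed

lemma ax_pair: "sat w e (All (All (Ex (Conj (Mem 2 0) (Mem 1 0)))))"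
proof (simp, intro allI impI)
  fix v x v' y
  let ?z = "mk {(x,Top),(y,Top)}"
  have "mem v' x ?z" "mem v' y ?z" by (auto intro: mem_child)
  thus "\<exists>z. mem v' x z \<and> mem v' y z" by blast
qed

definition Un_nm :: "nm \<Rightarrow> nm" where
  "Un_nm a = mk (\<Union>p\<in>ch a. (\<lambda>q. (fst q, tmeet (snd p) (snd q))) ` ch (fst p))"

lemma union_help:
  assumes l4: "le v'' v4" and mx: "mem v'' x a" and mz: "mem v4 z x"
  shows "mem v4 z (Un_nm a)"
proof -
  let ?U = "\<Union>p\<in>ch a. (\<lambda>q. (fst q, tmeet (snd p) (snd q))) ` ch (fst p)"
  have cU: "countable ?U" by auto
  from mx obtain p where p: "p \<in> ch a" "inT v'' (snd p)" "eqw v'' x (fst p)" unfolding mem_def by blast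
  have "mem v4 z (fst p)" using mem_congR[OF mz eqw_mono[OF l4 p(3)]] .
  then obtain q where q: "q \<in> ch (fst p)" "inT v4 (snd q)" "eqw v4 z (fst q)" unfolding mem_def by blast
  have "(fst q, tmeet (snd p) (snd q)) \<in> ch (mk ?U)" using p q cU by auto
  moreover have "inT v4 (tmeet (snd p) (snd q))" using q p inT_mono[OF l4] by auto
  ultimately have "mem v4 (fst q) (mk ?U)" using mem_child[of "fst q" "tmeet (snd p) (snd q)"] by simp
  thus "mem v4 z (Un_nm a)" unfolding Un_nm_def using q(3) mem_congL eqw_sym by blast
qed

lemma ax_union: "sat w e (All (Ex (All (Imp (Mem 0 2) (All (Imp (Mem 0 1) (Mem 0 2)))))))"
  apply simp
  apply (intro allI impI)
  apply (rule_tac x="Un_nm d" in exI)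
  apply (meson union_help le_trans)
  done



definition sep_nm :: "nm \<Rightarrow> (wld \<Rightarrow> nm \<Rightarrow> bool) \<Rightarrow> nm" where
  "sep_nm a P = mk ((\<lambda>p. (fst p, tvof {v. inT v (snd p) \<and> P v (fst p)})) ` ch a)"

lemma sep_mem:
  assumes mono: "\<And>v v' t. P v t \<Longrightarrow> le v v' \<Longrightarrow> P v' t"
    and cong: "\<And>v t t'. P v t \<Longrightarrow> eqw v t t' \<Longrightarrow> P v t'"
  shows "mem v x (sep_nm a P) \<longleftrightarrow> mem v x a \<and> P v x"
proof -
  have up: "inT v (tvof {v. inT v (snd p) \<and> P v (fst p)}) \<longleftrightarrow> inT v (snd p) \<and> P v (fst p)" for v p
  proof -
    have "\<And>u u'. u \<in> {v. inT v (snd p) \<and> P v (fst p)} \<Longrightarrow> le u u' \<Longrightarrow> u' \<in> {v. inT v (snd p) \<and> P v (fst p)}"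
      by (auto intro: inT_mono mono)
    from inT_tvof[OF this] show ?thesis by simp
  qed
  have "mem v x (sep_nm a P) \<longleftrightarrow> (\<exists>p\<in>ch a. inT v (snd p) \<and> P v (fst p) \<and> eqw v x (fst p))"
    unfolding sep_nm_def mem_def by (simp add: up)
  also have "\<dots> \<longleftrightarrow> (\<exists>p\<in>ch a. inT v (snd p) \<and> eqw v x (fst p)) \<and> P v x"
    using cong eqw_sym by blast
  finally show ?thesis unfolding mem_def .
qed

lemma sep_mem_sat: "mem v x (sep_nm a (\<lambda>v t. sat v (case_nat t e) \<phi>)) \<longleftrightarrow> mem v x a \<and> sat v (case_nat x e) \<phi>"
proof (rule sep_mem)
  show "\<And>v v' t. sat v (case_nat t e) \<phi> \<Longrightarrow> le v v' \<Longrightarrow> sat v' (case_nat t e) \<phi>"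
    using sat_mono by blast
  fix v t t' assume "sat v (case_nat t e) \<phi>" "eqw v t t'"
  moreover have "\<And>n. eqw v (case_nat t e n) (case_nat t' e n)" using \<open>eqw v t t'\<close>
    by (auto split: nat.splits)
  ultimately show "sat v (case_nat t' e) \<phi>" using sat_cong by blast
qed

lemma ax_sep: "sat w e (Ex (All (Iff (Mem 0 1) (Conj (Mem 0 (a + 2)) (lift 1 \<phi>)))))"
  apply (simp add: sat_Iff sat_lift lift1_env)
  apply (rule_tac x="sep_nm (e a) (\<lambda>v t. sat v (case_nat t e) \<phi>)" in exI)
  apply (simp add: sep_mem_sat)
  done

definition coll_nm :: "nm \<Rightarrow> (nm \<Rightarrow> wld \<Rightarrow> nm) \<Rightarrow> nm" where
  "coll_nm a Y = mk ((\<lambda>(p,v'). (Y (fst p) v', up v')) ` (ch a \<times> UNIV))"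

lemma coll_help:
  assumes H: "\<And>x v2. le v v2 \<Longrightarrow> mem v2 x a \<Longrightarrow> \<exists>y. S v2 x y"
    and cong: "\<And>v x x' y. S v x y \<Longrightarrow> eqw v x x' \<Longrightarrow> S v x' y"
    and l: "le v v2" and m: "mem v2 x a"
  shows "\<exists>y. mem v2 y (coll_nm a (\<lambda>t v'. SOME y. S v' t y)) \<and> S v2 x y"
proof -
  from m obtain p where p: "p \<in> ch a" "inT v2 (snd p)" "eqw v2 x (fst p)" unfolding mem_def by blast
  have "mem v2 (fst p) a" using p mem_child[of "fst p" "snd p" a v2] by simp
  then obtain y0 where "S v2 (fst p) y0" using H l by blast
  hence Sy: "S v2 (fst p) (SOME y. S v2 (fst p) y)" by (rule someI)
  let ?y = "SOME y. S v2 (fst p) y"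
  have c: "countable ((\<lambda>(p,v'). ((\<lambda>t v'. SOME y. S v' t y) (fst p) v', up v')) ` (ch a \<times> UNIV))"
    using countable_wld by (intro countable_image countable_SIGMA) auto
  have "(?y, up v2) \<in> ch (coll_nm a (\<lambda>t v'. SOME y. S v' t y))"
    unfolding coll_nm_def using c p by force
  hence "mem v2 ?y (coll_nm a (\<lambda>t v'. SOME y. S v' t y))"
    using mem_child[of ?y "up v2"] by simp
  moreover have "S v2 x ?y" using cong[OF Sy] p(3) eqw_sym by blast
  ultimately show ?thesis by blast
qed

lemma ax_coll: "sat w e (Imp (All (Imp (Mem 0 (Suc a)) (Ex \<phi>)))
          (Ex (All (Imp (Mem 0 (a + 2)) (Ex (Conj (Mem 0 2) (lift 2 \<phi>)))))))"
proof (simp add: sat_lift lift2_env, intro allI impI)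
  fix v assume lv: "le w v" and H0: "\<forall>v'. le v v' \<longrightarrow> (\<forall>d. \<forall>va. le v' va \<longrightarrow> mem va d (e a) \<longrightarrow>
                     (\<exists>da. sat va (case_nat da (case_nat d e)) \<phi>))"
  let ?S = "\<lambda>v2 x y. sat v2 (case_nat y (case_nat x e)) \<phi>"
  have H: "\<And>x v2. le v v2 \<Longrightarrow> mem v2 x (e a) \<Longrightarrow> \<exists>y. ?S v2 x y" using H0 le_refl by blast
  have cong: "\<And>v x x' y. ?S v x y \<Longrightarrow> eqw v x x' \<Longrightarrow> ?S v x' y"
  proof -
    fix v x x' y assume "?S v x y" "eqw v x x'"
    moreover have "\<And>n. eqw v (case_nat y (case_nat x e) n) (case_nat y (case_nat x' e) n)"
      using \<open>eqw v x x'\<close> by (auto split: nat.splits)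
    ultimately show "?S v x' y" using sat_cong by blast
  qed
  have C: "\<And>v2 x. le v v2 \<Longrightarrow> mem v2 x (e a) \<Longrightarrow> \<exists>y. mem v2 y (coll_nm (e a) (\<lambda>t v'. SOME y. ?S v' t y)) \<and> ?S v2 x y"
    apply (rule coll_help[where S="?S"])
       apply (erule (1) H)
      apply (erule (1) cong)
     apply assumption+
    done
  show "\<exists>d. \<forall>va. le v va \<longrightarrow> (\<forall>da. \<forall>vb. le va vb \<longrightarrow> mem vb da (e a) \<longrightarrow>
            (\<exists>db. mem vb db d \<and> sat vb (case_nat db (case_nat da e)) \<phi>))"
  proof (rule exI[of _ "coll_nm (e a) (\<lambda>t v'. SOME y. ?S v' t y)"], intro allI impI)
    fix va da vb assume "le v va" "le va vb" "mem vb da (e a)"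
    thus "\<exists>db. mem vb db (coll_nm (e a) (\<lambda>t v'. SOME y. ?S v' t y)) \<and> sat vb (case_nat db (case_nat da e)) \<phi>"
      using C le_trans by blast
  qed
qed

lemma setind_help:
  assumes H: "\<And>v1 a. le v v1 \<Longrightarrow> (\<And>v4 x. le v1 v4 \<Longrightarrow> mem v4 x a \<Longrightarrow> Q v4 x) \<Longrightarrow> Q v1 a"
    and cong: "\<And>v x x'. Q v x \<Longrightarrow> eqw v x x' \<Longrightarrow> Q v x'"
  shows "le v v1 \<Longrightarrow> Q v1 a"
proof (induction a arbitrary: v1 rule: nm_induct)
  case (step a)
  show ?case
  proof (rule H[OF step.prems])
    fix v4 x assume "le v1 v4" "mem v4 x a"
    then obtain p where p: "p \<in> ch a" "inT v4 (snd p)" "eqw v4 x (fst p)" unfolding mem_def by blast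
    have "Q v4 (fst p)" using step.IH[of "fst p" "snd p"] p(1) step.prems \<open>le v1 v4\<close> le_trans by auto
    thus "Q v4 x" using cong p(3) eqw_sym by blast
  qed
qed

lemma ax_setind: "sat w e (Imp (All (Imp (All (Imp (Mem 0 1) (lift 1 \<phi>))) \<phi>)) (All \<phi>))"
proof (simp add: sat_lift lift1_env, intro allI impI)
  fix v v1 a assume lv: "le w v" and H0: "\<forall>v'. le v v' \<longrightarrow> (\<forall>d. \<forall>va. le v' va \<longrightarrow>
     (\<forall>vb. le va vb \<longrightarrow> (\<forall>da. \<forall>vc. le vb vc \<longrightarrow> mem vc da d \<longrightarrow> sat vc (case_nat da e) \<phi>)) \<longrightarrow>
     sat va (case_nat d e) \<phi>)" and l1: "le v v1"
  let ?Q = "\<lambda>v x. sat v (case_nat x e) \<phi>"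
  have cong: "\<And>v x x'. ?Q v x \<Longrightarrow> eqw v x x' \<Longrightarrow> ?Q v x'"
  proof -
    fix v x x' assume "?Q v x" "eqw v x x'"
    moreover have "\<And>n. eqw v (case_nat x e n) (case_nat x' e n)"
      using \<open>eqw v x x'\<close> by (auto split: nat.splits)
    ultimately show "?Q v x'" using sat_cong by blast
  qed
  have H: "\<And>v1 a. le v v1 \<Longrightarrow> (\<And>v4 x. le v1 v4 \<Longrightarrow> mem v4 x a \<Longrightarrow> ?Q v4 x) \<Longrightarrow> ?Q v1 a"
  proof -
    fix v1 a assume l: "le v v1" and hyp: "\<And>v4 x. le v1 v4 \<Longrightarrow> mem v4 x a \<Longrightarrow> ?Q v4 x"
    have "\<forall>vb. le v1 vb \<longrightarrow> (\<forall>da vc. le vb vc \<longrightarrow> mem vc da a \<longrightarrow> ?Q vc da)"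
    proof (intro allI impI)
      fix vb da vc assume "le v1 vb" "le vb vc" "mem vc da a"
      thus "?Q vc da" using hyp[of vc da] le_trans[of v1 vb vc] by simp
    qed
    moreover have "le v1 v1 \<longrightarrow> (\<forall>vb. le v1 vb \<longrightarrow> (\<forall>da vc. le vb vc \<longrightarrow> mem vc da a \<longrightarrow> ?Q vc da)) \<longrightarrow> ?Q v1 a"
      using spec[OF spec[OF mp[OF spec[OF H0, of v1] l], of a], of v1] by simp
    ultimately show "?Q v1 a" by simp
  qed
  show "?Q v1 a" using setind_help[OF H cong l1] .
qed



fun num :: "nat \<Rightarrow> nm" where
  "num 0 = mk {}"
| "num (Suc n) = mk (insert (num n, Top) (ch (num n)))"

definition om :: nm where "om = mk (range (\<lambda>n. (num n, Top)))"

lemma mem_num0[simp]: "\<not> mem v x (num 0)" by (simp add: mem_def)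

lemma mem_numS: "mem v x (num (Suc n)) \<longleftrightarrow> eqw v x (num n) \<or> mem v x (num n)"
  by (auto simp: mem_def)

declare num.simps(2)[simp del]

lemma mem_om: "mem v x om \<longleftrightarrow> (\<exists>n. eqw v x (num n))"
  by (auto simp: mem_def om_def)

lemma succ_num:
  assumes "eqw v2 y (num n)"
  shows "(\<exists>m. eqw v2 (num (Suc n)) (num m)) \<and> (\<forall>v'. le v2 v' \<longrightarrow> (\<forall>x. mem v' x (num (Suc n)) = (mem v' x y \<or> eqw v' x y)))"
proof (intro conjI allI impI)
  show "\<exists>m. eqw v2 (num (Suc n)) (num m)" by (rule exI[of _ "Suc n"]) simp
  fix v' x assume "le v2 v'"
  hence e: "eqw v' y (num n)" using assms eqw_mono by blast
  show "mem v' x (num (Suc n)) = (mem v' x y \<or> eqw v' x y)"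
    unfolding mem_numS using e by (meson eqw_sym eqw_trans mem_congR)
qed

lemma ind_om: "sat v (case_nat om e) (ind 0)"
  unfolding ind_def
  apply (simp add: sat_isEmpty sat_isSucc mem_om)
  apply (intro conjI)
   apply (rule exI[of _ "num 0"])
   apply (intro conjI)
    apply (rule exI[of _ 0], simp)
   apply (simp add: mem_def)
  apply (intro allI impI, erule exE)
  apply (drule succ_num)
  apply blast
  done

lemma ind_least:
  assumes "sat v E (ind 0)"
  shows "mem v (num n) (E 0)"
proof -
  have A: "\<exists>d. mem v d (E 0) \<and> (\<forall>v'. le v v' \<longrightarrow> (\<forall>z. \<not> mem v' z d))"
    using assms unfolding ind_def by (simp add: sat_isEmpty)
  have H2: "\<forall>va. le v va \<longrightarrow> (\<forall>d v'. le va v' \<longrightarrow> mem v' d (E 0) \<longrightarrow> (\<exists>da. mem v' da (E 0) \<and> (\<forall>va'. le v' va' \<longrightarrow> (\<forall>x. mem va' x da = (mem va' x d \<or> eqw va' x d)))))"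
    using assms unfolding ind_def by (simp add: sat_isSucc)
  have B: "\<And>y. mem v y (E 0) \<Longrightarrow> \<exists>z. mem v z (E 0) \<and> (\<forall>v'. le v v' \<longrightarrow> (\<forall>x. mem v' x z \<longleftrightarrow> mem v' x y \<or> eqw v' x y))"
    using H2[rule_format, OF le_refl le_refl] by blast
  show ?thesis
  proof (induction n)
    case 0
    from A obtain d where d: "mem v d (E 0)" "\<forall>v'. le v v' \<longrightarrow> (\<forall>z. \<not> mem v' z d)" by blast
    have "eqw v d (num 0)" by (rule empty_eq0) (use d in \<open>auto simp: mem_def\<close>)
    thus ?case using d mem_congL by blast
  next
    case (Suc n)
    from B[OF Suc] obtain z where z: "mem v z (E 0)" "\<forall>v'. le v v' \<longrightarrow> (\<forall>x. mem v' x z \<longleftrightarrow> mem v' x (num n) \<or> eqw v' x (num n))" by blast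
    have "eqw v z (num (Suc n))"
      by (rule ext_sem) (use z in \<open>auto simp: mem_numS\<close>)
    thus ?case using z mem_congL by blast
  qed
qed

lemma ax_inf: "sat w e (Ex (Conj (ind 0) (All (Imp (ind 0) (subsetf 1 0)))))"
proof (simp only: sat.simps, rule exI[of _ om], intro conjI allI impI)
  show "sat w (case_nat om e) (ind 0)" by (rule ind_om)
  fix v d v' assume "le v v'" "sat v' (case_nat d (case_nat om e)) (ind 0)"
  hence "\<And>n. mem v' (num n) d" using ind_least by fastforce
  thus "sat v' (case_nat d (case_nat om e)) (subsetf 1 0)"
    by (simp add: sat_subsetf mem_om) (meson mem_congL eqw_sym mem_mono)
qed

theorem IKP_valid: "q \<in> IKP \<Longrightarrow> sat w e q"
  by (erule IKP.cases) (simp_all only: ax_ext ax_empty ax_pair ax_union ax_sep ax_coll ax_setind ax_inf)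



declare num.simps(1)[simp del]

definition beta :: "nat set \<Rightarrow> nm" where "beta S = mk {(num 0, Lv S)}"
definition one :: nm where "one = num (Suc 0)"

lemma mem_beta: "mem v z (beta S) \<longleftrightarrow> inT v (Lv S) \<and> eqw v z (num 0)"
  by (simp add: mem_def beta_def)

lemma mem_one: "mem v z one \<longleftrightarrow> eqw v z (num 0)"
  by (simp add: one_def mem_numS)

lemma eq0_iff: "eqw v z (num 0) \<longleftrightarrow> (\<forall>v'. le v v' \<longrightarrow> (\<forall>x. \<not> mem v' x z))"
proof
  assume "eqw v z (num 0)"
  thus "\<forall>v'. le v v' \<longrightarrow> (\<forall>x. \<not> mem v' x z)"
    by (meson eqw_mono mem_congR mem_num0)
next
  assume "\<forall>v'. le v v' \<longrightarrow> (\<forall>x. \<not> mem v' x z)"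
  thus "eqw v z (num 0)" by (rule empty_eq0) simp
qed

lemma beta_inj: "eqw R (beta S) (beta S') \<Longrightarrow> S \<subseteq> S'"
proof
  fix n assume e: "eqw R (beta S) (beta S')" and n: "n \<in> S"
  have "eqw (L n) (beta S) (beta S')" using eqw_mono[OF _ e] by simp
  moreover have "mem (L n) (num 0) (beta S)" using n by (simp add: mem_beta)
  ultimately have "mem (L n) (num 0) (beta S')" using mem_congR by blast
  thus "n \<in> S'" by (simp add: mem_beta)
qed

lemma uncountable_nat_sets: "\<not> countable (UNIV :: nat set set)"
proof
  assume "countable (UNIV :: nat set set)"
  then obtain g :: "nat set \<Rightarrow> nat" where g: "inj g" by (auto elim: countableE)
  have "(inv g) ` UNIV = Pow (UNIV :: nat set)"
  proof
    show "range (inv g) \<subseteq> Pow UNIV" by simp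
    show "Pow UNIV \<subseteq> range (inv g)"
    proof
      fix S :: "nat set" assume "S \<in> Pow UNIV"
      have "inv g (g S) = S" using g by simp
      thus "S \<in> range (inv g)" by (metis rangeI)
    qed
  qed
  thus False using Cantors_theorem by blast
qed

lemma nocount:
  assumes all: "\<And>S. mem R (beta S) s"
  shows False
proof -
  have ex: "\<forall>S. \<exists>q. q \<in> ch s \<and> eqw R (beta S) (fst q)"
    using all unfolding mem_def by blast
  define f where "f S = fst (SOME q. q \<in> ch s \<and> eqw R (beta S) (fst q))" for S
  have f: "f S \<in> fst ` ch s \<and> eqw R (beta S) (f S)" for S
  proof -
    have "(SOME q. q \<in> ch s \<and> eqw R (beta S) (fst q)) \<in> ch s \<and> eqw R (beta S) (fst (SOME q. q \<in> ch s \<and> eqw R (beta S) (fst q)))"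
      using someI_ex[OF ex[rule_format, of S]] .
    thus ?thesis unfolding f_def by blast
  qed
  have "inj f"
  proof (rule injI)
    fix S S' assume "f S = f S'"
    hence "eqw R (beta S) (beta S')" "eqw R (beta S') (beta S)" using f eqw_sym eqw_trans by metis+
    thus "S = S'" using beta_inj by blast
  qed
  have sub: "range f \<subseteq> fst ` ch s" using f by blast
  have cr: "countable (range f)" by (rule countable_subset[OF sub]) simp
  have "countable (UNIV :: nat set set)" by (rule countable_image_inj_on[OF cr \<open>inj f\<close>])
  thus False using uncountable_nat_sets by blast
qed

lemma sub_beta: "E a = beta S \<Longrightarrow> E b = one \<Longrightarrow> sat v E (subsetf a b)"
  by (simp add: sat_subsetf mem_beta mem_one)

lemma relpl_beta: "E g = beta S \<Longrightarrow> sat v E (relpl a g)"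
  unfolding relpl_def
proof (simp only: sat.simps, intro allI impI)
  fix v1 d v2 v3 da v4 v5
  assume Eg: "E g = beta S" and l: "le v2 v3" "le v3 v4" "le v4 v5"
    and m: "mem v2 (case_nat d E (0::nat)) (case_nat d E (Suc g))"
    and s: "sat v5 (case_nat da (case_nat d E)) (subsetf 0 1)"
  have l25: "le v2 v5" using l le_trans by blast
  have md: "inT v2 (Lv S)" "eqw v2 d (num 0)" using m Eg by (simp_all add: mem_beta)
  have "\<forall>v'. le v5 v' \<longrightarrow> (\<forall>x. \<not> mem v' x da)"
  proof (intro allI impI notI)
    fix v' x assume "le v5 v'" "mem v' x da"
    hence "mem v' x d" using s by (simp add: sat_subsetf)
    moreover have "eqw v' d (num 0)" using md(2) l25 \<open>le v5 v'\<close> eqw_mono le_trans by blast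
    ultimately show False using mem_congR mem_num0 by blast
  qed
  hence "eqw v5 da (num 0)" using eq0_iff by blast
  moreover have "inT v5 (Lv S)" using md(1) l25 inT_mono by blast
  ultimately show "mem v5 (case_nat da (case_nat d E) 0) (case_nat da (case_nat d E) (g + 2))"
    using Eg by (simp add: mem_beta)
qed

lemma isOne_one: "sat v (case_nat one e) (isOne 0)"
  by (simp add: sat_isOne mem_one eq0_iff)

lemma not_plsucc: "\<not> IKP_proves one_plsucc_exists"
proof
  assume "IKP_proves one_plsucc_exists"
  hence H: "sat R (\<lambda>_. num 0) one_plsucc_exists"
    unfolding IKP_proves_def using soundness IKP_valid by blast
  note H1 = H[unfolded one_plsucc_exists_def sat.simps]
  obtain s where s: "\<forall>v. le R v \<longrightarrow> (\<forall>\<beta>. sat v (case_nat \<beta> (case_nat s (case_nat one (\<lambda>_. num 0))))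
       (Iff (Mem 0 1) (Conj (subsetf 0 2) (relpl 2 0))))"
    using H1[rule_format, OF le_refl le_refl isOne_one] by blast
  show False
  proof (rule nocount)
    fix S
    let ?E = "case_nat (beta S) (case_nat s (case_nat one (\<lambda>_. num 0)))"
    have "sat R ?E (Iff (Mem 0 1) (Conj (subsetf 0 2) (relpl 2 0)))"
      using s by simp
    hence "mem R (beta S) s \<longleftrightarrow> sat R ?E (subsetf 0 2) \<and> sat R ?E (relpl 2 0)"
      by (simp add: sat_Iff)
    moreover have "sat R ?E (subsetf 0 2)" by (rule sub_beta) simp_all
    moreover have "sat R ?E (relpl 2 0)" by (rule relpl_beta) simp
    ultimately show "mem R (beta S) s" by blast
  qed
qed



lemma plord_sem:
  assumes "sat R E (plord 0)" "mem R b (E 0)"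
    "sat R (case_nat g (case_nat b E)) (subsetf 0 1)" "sat R (case_nat g (case_nat b E)) (relpl 2 0)"
  shows "mem R g (E 0)"
  using assms unfolding plord_def
  apply (simp add: numeral_2_eq_2)
  apply (elim conjE)
  apply (drule spec[of _ R], drule spec[of _ b], drule spec[of _ R])
  apply (drule mp[OF _ le_refl], drule (1) mp)
  apply (drule spec[of _ R], drule mp[OF _ le_refl])
  apply (drule spec[of _ g], drule spec[of _ R], drule mp[OF _ le_refl])
  apply (drule mp, erule (1) conjI)
  apply (erule conjunct1)
  done
lemma not_PlUb:
  assumes "IKP_proves one_PlOrd"
  shows "\<not> IKP_proves PlUb"
proof
  assume "IKP_proves PlUb"
  hence H: "sat R (\<lambda>_. num 0) PlUb"
    unfolding IKP_proves_def using soundness IKP_valid by blast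
  have O: "sat R (\<lambda>_. num 0) one_PlOrd"
    using assms unfolding IKP_proves_def using soundness IKP_valid by blast
  have P1: "sat R (case_nat one (\<lambda>_. num 0)) (plord 0)"
    using O[unfolded one_PlOrd_def sat.simps, rule_format, OF le_refl le_refl isOne_one] .
  obtain b where b: "sat R (case_nat b (case_nat one (\<lambda>_. num 0))) (plord 0)" "mem R one b"
    using H[unfolded PlUb_def sat.simps, rule_format, OF le_refl le_refl P1] by auto
  show False
  proof (rule nocount)
    fix S
    show "mem R (beta S) b"
      using plord_sem[OF b(1), of one "beta S"] b(2) sub_beta relpl_beta by simp
  qed
qed



lemma allE': "prv T \<Gamma> (All \<phi>) \<Longrightarrow> \<psi> = subst \<phi> 0 t \<Longrightarrow> prv T \<Gamma> \<psi>"
  using prv.AllE by blast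

lemma lift_isOne[simp]: "lift k (isOne v) = isOne (liftv k v)"
  by (simp add: isOne_def isEmpty_def Iff_def liftv_def)

lemma lift_subsetf[simp]: "lift k (subsetf a b) = subsetf (liftv k a) (liftv k b)"
  by (simp add: subsetf_def liftv_def)

lemma one_mem_empty:
  assumes "prv T \<Gamma> (isOne ob)" "prv T \<Gamma> (Mem i ob)" "prv T \<Gamma> (Mem j i)"
  shows "prv T \<Gamma> \<phi>"
proof -
  have "prv T \<Gamma> (Iff (Mem i ob) (isEmpty i))"
    by (rule allE'[OF assms(1)[unfolded isOne_def]]) (simp add: isEmpty_def Iff_def substv_def)
  hence "prv T \<Gamma> (Imp (Mem i ob) (isEmpty i))" unfolding Iff_def by (rule prv.ConjE1)
  hence "prv T \<Gamma> (isEmpty i)" using assms(2) by (rule prv.ImpE)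
  hence "prv T \<Gamma> (All (Imp (Mem 0 (Suc i)) FF))" by (simp add: isEmpty_def)
  hence "prv T \<Gamma> (Imp (Mem j i) FF)"
    by (rule allE') (simp add: substv_def)
  hence "prv T \<Gamma> FF" using assms(3) by (rule prv.ImpE)
  thus ?thesis by (rule prv.FFE)
qed

lemma one_empty_mem:
  assumes "prv T \<Gamma> (isOne ob)" "prv T \<Gamma> (isEmpty i)"
  shows "prv T \<Gamma> (Mem i ob)"
proof -
  have "prv T \<Gamma> (Iff (Mem i ob) (isEmpty i))"
    by (rule allE'[OF assms(1)[unfolded isOne_def]]) (simp add: isEmpty_def Iff_def substv_def)
  hence "prv T \<Gamma> (Imp (isEmpty i) (Mem i ob))" unfolding Iff_def by (rule prv.ConjE2)
  thus ?thesis using assms(2) by (rule prv.ImpE)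
qed

lemma one_PlOrd_prv: "IKP_proves one_PlOrd"
  unfolding IKP_proves_def one_PlOrd_def plord_def ordf_def transf_def
  unfolding numeral_2_eq_2 numeral_3_eq_3 One_nat_def add_0 add_Suc_right add_Suc
  apply (rule prv.AllI, simp only: image_empty)
  apply (rule prv.ImpI)
  apply (rule prv.ConjI)+
  (* transitivity of one *)
    apply (rule prv.AllI, rule prv.ImpI, unfold subsetf_def, rule prv.AllI, rule prv.ImpI)
    apply (rule one_mem_empty[where ob="Suc (Suc 0)" and i="Suc 0" and j=0])
      apply (rule prv.Assm, simp add: liftv_def)
     apply (rule prv.Assm, simp add: liftv_def)
    apply (rule prv.Assm, simp add: liftv_def)
  (* elements transitive *)
   apply (rule prv.AllI, rule prv.ImpI, rule prv.AllI, rule prv.ImpI, rule prv.AllI, rule prv.ImpI)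
   apply (rule one_mem_empty[where ob="Suc (Suc (Suc 0))" and i="Suc (Suc 0)" and j="Suc 0"])
     apply (rule prv.Assm, simp add: liftv_def)
    apply (rule prv.Assm, simp add: liftv_def)
   apply (rule prv.Assm, simp add: liftv_def)
  (* plumpness *)
  apply (rule prv.AllI, rule prv.ImpI, rule prv.AllI, rule prv.ImpI)
  apply (rule prv.ConjI)
   apply (rule one_empty_mem[where ob="Suc (Suc 0)" and i=0])
    apply (rule prv.Assm, simp add: liftv_def)
   apply (unfold isEmpty_def)
   apply (rule prv.AllI, rule prv.ImpI)
   apply (rule one_mem_empty[where ob="Suc (Suc (Suc 0))" and i="Suc (Suc 0)" and j=0])
     apply (rule prv.Assm, simp add: liftv_def)
    apply (rule prv.Assm, simp add: liftv_def)
   apply (rule prv.ImpE[where \<phi>="Mem 0 (Suc 0)"])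
    apply (rule allE'[where \<phi>="Imp (Mem 0 (Suc (Suc 0))) (Mem 0 (Suc (Suc (Suc 0))))" and t=0])
     apply (rule prv.ConjE1[where \<psi>="lift 0 (relpl (Suc (Suc 0)) 0)"])
     apply (rule prv.Assm, simp add: liftv_def)
    apply (simp add: substv_def)
   apply (rule prv.Assm, simp add: liftv_def)
  apply (rule prv.AllI, rule prv.ImpI, rule prv.ImpI)
  apply (rule one_mem_empty[where ob="Suc (Suc (Suc 0))" and i=0 and j="Suc (Suc 0)"])
    apply (rule prv.Assm, simp add: liftv_def)
   apply (rule prv.Assm, simp add: liftv_def)
  apply (rule prv.Assm, simp add: liftv_def)
  done


theorem proposition3p2:
  shows "\<not> IKP_proves PlUb \<and> IKP_proves one_PlOrd \<and> \<not> IKP_proves one_plsucc_exists"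
  using not_PlUb[OF one_PlOrd_prv] one_PlOrd_prv not_plsucc by blast

end
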